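(* For every integer $d>3$, the lattice $[2 \; d+1 \; 2d]$ does not represent $-2$.
   Context: Notation: $[a\; b\; c]$ with $a,b,c\in\mathbb{Z}$ denotes a lattice of rank 2 with a basis whose Gram matrix is $\begin{pmatrix} a & b\\ b & c\end{pmatrix}$. A lattice represents an integer $m$ if it contains an element $x$ with $x^2=m$. *)

theory Defs
  imports Main
begin

text \<open>The rank-2 lattice [a b c]: Z^2 with Gram matrix ((a,b),(b,c)).
  The norm of the element x e1 + y e2 is a x^2 + 2 b x y + c y^2.\<close>

definition lattice_norm :: "int \<Rightarrow> int \<Rightarrow> int \<Rightarrow> int \<Rightarrow> int \<Rightarrow> int" where
  "lattice_norm a b c x y = a * x^2 + 2 * b * x * y + c * y^2"

definition represents :: "int \<Rightarrow> int \<Rightarrow> int \<Rightarrow> int \<Rightarrow> bool" where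
  "represents a b c m \<longleftrightarrow> (\<exists>x y. lattice_norm a b c x y = m)"

end

theory Submission
  imports Defs
begin

lemma prod_m1:
  fixes a b :: int
  assumes "a * b = -1"
  shows "(a = 1 \<and> b = -1) \<or> (a = -1 \<and> b = 1)"
proof -
  have "a dvd 1" using assms by (metis dvd_minus_iff dvd_triv_left)
  then have "a = 1 \<or> a = -1" using zdvd1_eq[of a] by linarith
  then show ?thesis using assms by auto
qed

theorem lemma3p3:
  fixes d :: int
  assumes "d > 3"
  shows "\<not> represents 2 (d + 1) (2 * d) (-2)"
proof
  assume "represents 2 (d + 1) (2 * d) (-2)"
  then obtain x y where h: "2 * x^2 + 2 * (d+1) * x * y + 2*d * y^2 = -2"
    unfolding represents_def lattice_norm_def by auto
  have "(x + y) * (x + d * y) = -1"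
    using h by (simp add: algebra_simps power2_eq_square)
  then have c: "(x + y = 1 \<and> x + d*y = -1) \<or> (x + y = -1 \<and> x + d*y = 1)"
    by (rule prod_m1)
  then have "(d - 1) * y = -2 \<or> (d - 1) * y = 2" by (auto simp: algebra_simps)
  then have "(d - 1) dvd 2" by (metis dvd_minus_iff dvd_triv_left)
  then have "d - 1 \<le> 2" using assms by (intro zdvd_imp_le) auto
  then show False using assms by simp
qed

end
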